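(* Let $\mathbb V$ be the 2-vector space of a 2-term complex $V_1\xrightarrow{\mathrm d}V_0$, and let $L=\{X+\pi(\xi)+\xi:X\in\mathcal D,\xi\in\mathcal D^0\}$ be a Dirac structure of the omni-Lie 2-algebra $\mathfrak{gl}(\mathbb V)\oplus\mathbb V$ with characteristic pair $(\mathcal D,\pi)$, and equip $\mathcal D^0$ with the strict Lie 2-algebra bracket $[\xi,\eta]_{\mathcal D^0}=\pi(\xi)(\eta)$. Then an element $N\in\mathfrak{gl}(\mathbb V)$ lies in the normalizer $N_L$ if and only if (1) $[N,X]\in\mathcal D$ for all $X\in\mathcal D$, and (2) for all $\xi,\eta\in\mathcal D^0$, $N(\xi)\in\mathcal D^0$ and $N([\xi,\eta]_{\mathcal D^0})=[\xi,N(\eta)]_{\mathcal D^0}+[N(\xi),\eta]_{\mathcal D^0}$.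
   Context: All vector spaces are finite-dimensional over $\mathbb R$. For a 2-term complex $V_1\xrightarrow{\mathrm d}V_0$, $\mathbb V$ has objects $V_0$, morphisms $V_0\oplus V_1$ ($u+m$), $s(u+m)=u$, $t(u+m)=u+\mathrm dm$. Let $\mathrm{End}^0_{\mathrm d}(\mathbb V)=\{A=(A_0,A_1):A_0\mathrm d=\mathrm dA_1\}$, $\mathrm{End}^1(\mathbb V)=\mathrm{Hom}(V_0,V_1)$, $\delta\phi=(\mathrm d\phi,\phi\mathrm d)$; brackets $[A,B]$ componentwise commutator, $[A,\phi]=-[\phi,A]=A_1\phi-\phi A_0$, $[\phi,\psi]_\delta=\phi\mathrm d\psi-\psi\mathrm d\phi$. The strict Lie 2-algebra $\mathfrak{gl}(\mathbb V)$ has objects $\mathrm{End}^0_{\mathrm d}(\mathbb V)$, morphisms $A+\phi$, $s(A+\phi)=A$, $t(A+\phi)=A+\delta\phi$, bracket $[A+\phi,B+\psi]=[A,B]+[\phi,\psi]_\delta+[A,\psi]+[\phi,B]$, and acts on $\mathbb V$ by $A(u)=A_0u$, $(A+\phi)(u+m)=A_0u+(A_1m+\phi(u+\mathrm dm))$. The omni-Lie 2-algebra is $\mathfrak{gl}(\mathbb V)\oplus\mathbb V$ with pairing $\langle A+\phi+u+m,B+\psi+v+n\rangle=\tfrac12((A+\phi)(v+n)+(B+\psi)(u+m))$ and bracket $[\![A+\phi+u+m,B+\psi+v+n]\!]=[A+\phi,B+\psi]+\tfrac12((A+\phi)(v+n)-(B+\psi)(u+m))$ (similar formulas on objects), and the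 bracket $\{e_1,e_2\}=[\![e_1,e_2]\!]+\langle e_1,e_2\rangle$, i.e. $\{A+\phi+u+m,B+\psi+v+n\}=[A+\phi,B+\psi]+(A+\phi)(v+n)$. $L^\perp=\{e:\langle e,l\rangle=0\ \forall l\in L\}$; a Dirac structure is a 2-sub-vector space $L=L^\perp$ closed under $[\![\cdot,\cdot]\!]$. Characteristic pair of a maximal isotropic $L$: $\mathcal D=L\cap\mathfrak{gl}(\mathbb V)$, $\mathcal D^0=\{\xi\in\mathbb V:X(\xi)=0\ \forall X\in\mathcal D\}$ (levelwise), and a linear functor $\pi:\mathbb V\to\mathfrak{gl}(\mathbb V)$ with $\pi(\xi)(\eta)=-\pi(\eta)(\xi)$ on $\mathcal D^0$ and $L=\{X+\pi(\xi)+\xi\}$. The normalizer of a 2-sub-vector space $K\subset\mathfrak{gl}(\mathbb V)\oplus\mathbb V$ is $N_K=\{N\in\mathfrak{gl}(\mathbb V):\{N,k\}\in K\ \forall k\in K\}$ (levelwise, $N$ viewed as $N+0$). *)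

theory Defs
  imports "HOL-Analysis.Analysis"
begin

text \<open>2-term complex V1 --d--> V0, with V0 = 'a, V1 = 'b (finite-dimensional real spaces).
  Level 0 of gl(V): pairs (A0,A1); level 1: (A, phi) with phi : V0 -> V1.
  Level 0 of the omni-Lie 2-algebra: (A, u); level 1: ((A,phi),(u,m)).\<close>

type_synonym ('a,'b) gl0 = "('a \<Rightarrow> 'a) \<times> ('b \<Rightarrow> 'b)"
type_synonym ('a,'b) gl1 = "('a,'b) gl0 \<times> ('a \<Rightarrow> 'b)"
type_synonym ('a,'b) om0 = "('a,'b) gl0 \<times> 'a"
type_synonym ('a,'b) om1 = "('a,'b) gl1 \<times> ('a \<times> 'b)"

definition End0 :: "('b::real_vector \<Rightarrow> 'a::real_vector) \<Rightarrow> ('a,'b) gl0 set" where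
  "End0 d = {(A0, A1). linear A0 \<and> linear A1 \<and> A0 \<circ> d = d \<circ> A1}"

definition Gl1 :: "('b::real_vector \<Rightarrow> 'a::real_vector) \<Rightarrow> ('a,'b) gl1 set" where
  "Gl1 d = {(A, phi). A \<in> End0 d \<and> linear phi}"

definition Om0 :: "('b::real_vector \<Rightarrow> 'a::real_vector) \<Rightarrow> ('a,'b) om0 set" where
  "Om0 d = End0 d \<times> UNIV"

definition Om1 :: "('b::real_vector \<Rightarrow> 'a::real_vector) \<Rightarrow> ('a,'b) om1 set" where
  "Om1 d = Gl1 d \<times> UNIV"

definition gl0_zero :: "('a::real_vector,'b::real_vector) gl0" where
  "gl0_zero = (\<lambda>x. 0, \<lambda>y. 0)"
definition gl0_add :: "('a::real_vector,'b::real_vector) gl0 \<Rightarrow> ('a,'b) gl0 \<Rightarrow> ('a,'b) gl0" where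
  "gl0_add A B = (\<lambda>x. fst A x + fst B x, \<lambda>y. snd A y + snd B y)"
definition gl0_scale :: "real \<Rightarrow> ('a::real_vector,'b::real_vector) gl0 \<Rightarrow> ('a,'b) gl0" where
  "gl0_scale c A = (\<lambda>x. c *\<^sub>R fst A x, \<lambda>y. c *\<^sub>R snd A y)"

definition gl1_zero :: "('a::real_vector,'b::real_vector) gl1" where
  "gl1_zero = (gl0_zero, \<lambda>x. 0)"
definition gl1_add :: "('a::real_vector,'b::real_vector) gl1 \<Rightarrow> ('a,'b) gl1 \<Rightarrow> ('a,'b) gl1" where
  "gl1_add N M = (gl0_add (fst N) (fst M), \<lambda>x. snd N x + snd M x)"
definition gl1_scale :: "real \<Rightarrow> ('a::real_vector,'b::real_vector) gl1 \<Rightarrow> ('a,'b) gl1" where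
  "gl1_scale c N = (gl0_scale c (fst N), \<lambda>x. c *\<^sub>R snd N x)"

definition om0_zero :: "('a::real_vector,'b::real_vector) om0" where
  "om0_zero = (gl0_zero, 0)"
definition om0_add :: "('a::real_vector,'b::real_vector) om0 \<Rightarrow> ('a,'b) om0 \<Rightarrow> ('a,'b) om0" where
  "om0_add e f = (gl0_add (fst e) (fst f), snd e + snd f)"
definition om0_scale :: "real \<Rightarrow> ('a::real_vector,'b::real_vector) om0 \<Rightarrow> ('a,'b) om0" where
  "om0_scale c e = (gl0_scale c (fst e), c *\<^sub>R snd e)"

definition om1_zero :: "('a::real_vector,'b::real_vector) om1" where
  "om1_zero = (gl1_zero, 0)"
definition om1_add :: "('a::real_vector,'b::real_vector) om1 \<Rightarrow> ('a,'b) om1 \<Rightarrow> ('a,'b) om1" where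
  "om1_add e f = (gl1_add (fst e) (fst f), snd e + snd f)"
definition om1_scale :: "real \<Rightarrow> ('a::real_vector,'b::real_vector) om1 \<Rightarrow> ('a,'b) om1" where
  "om1_scale c e = (gl1_scale c (fst e), c *\<^sub>R snd e)"

definition gl_br0 :: "('a,'b) gl0 \<Rightarrow> ('a,'b) gl0 \<Rightarrow> ('a::real_vector,'b::real_vector) gl0" where
  "gl_br0 A B = (\<lambda>x. fst A (fst B x) - fst B (fst A x), \<lambda>y. snd A (snd B y) - snd B (snd A y))"

text \<open>[A+phi, B+psi] = [A,B] + [phi,psi]_delta + [A,psi] + [phi,B], with
  [phi,psi]_delta = phi d psi - psi d phi, [A,psi] = A1 psi - psi A0, [phi,B] = phi B0 - B1 phi.\<close>
definition gl_br1 :: "('b::real_vector \<Rightarrow> 'a::real_vector) \<Rightarrow> ('a,'b) gl1 \<Rightarrow> ('a,'b) gl1 \<Rightarrow> ('a,'b) gl1" where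
  "gl_br1 d N M = (gl_br0 (fst N) (fst M),
     \<lambda>u. snd N (d (snd M u)) - snd M (d (snd N u))
        + snd (fst N) (snd M u) - snd M (fst (fst N) u)
        + snd N (fst (fst M) u) - snd (fst M) (snd N u))"

definition act0 :: "('a,'b) gl0 \<Rightarrow> 'a \<Rightarrow> 'a" where
  "act0 A u = fst A u"
definition act1 :: "('b::real_vector \<Rightarrow> 'a::real_vector) \<Rightarrow> ('a,'b) gl1 \<Rightarrow> 'a \<times> 'b \<Rightarrow> 'a \<times> 'b" where
  "act1 d N \<xi> = (fst (fst N) (fst \<xi>), snd (fst N) (snd \<xi>) + snd N (fst \<xi> + d (snd \<xi>)))"

definition pair0 :: "('a::real_vector,'b::real_vector) om0 \<Rightarrow> ('a,'b) om0 \<Rightarrow> 'a" where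
  "pair0 e f = (1/2) *\<^sub>R (act0 (fst e) (snd f) + act0 (fst f) (snd e))"
definition pair1 :: "('b::real_vector \<Rightarrow> 'a::real_vector) \<Rightarrow> ('a,'b) om1 \<Rightarrow> ('a,'b) om1 \<Rightarrow> 'a \<times> 'b" where
  "pair1 d e f = (1/2) *\<^sub>R (act1 d (fst e) (snd f) + act1 d (fst f) (snd e))"

definition cbr0 :: "('a::real_vector,'b::real_vector) om0 \<Rightarrow> ('a,'b) om0 \<Rightarrow> ('a,'b) om0" where
  "cbr0 e f = (gl_br0 (fst e) (fst f), (1/2) *\<^sub>R (act0 (fst e) (snd f) - act0 (fst f) (snd e)))"
definition cbr1 :: "('b::real_vector \<Rightarrow> 'a::real_vector) \<Rightarrow> ('a,'b) om1 \<Rightarrow> ('a,'b) om1 \<Rightarrow> ('a,'b) om1" where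
  "cbr1 d e f = (gl_br1 d (fst e) (fst f), (1/2) *\<^sub>R (act1 d (fst e) (snd f) - act1 d (fst f) (snd e)))"

definition curly0 :: "('a::real_vector,'b::real_vector) om0 \<Rightarrow> ('a,'b) om0 \<Rightarrow> ('a,'b) om0" where
  "curly0 e f = (gl_br0 (fst e) (fst f), act0 (fst e) (snd f))"
definition curly1 :: "('b::real_vector \<Rightarrow> 'a::real_vector) \<Rightarrow> ('a,'b) om1 \<Rightarrow> ('a,'b) om1 \<Rightarrow> ('a,'b) om1" where
  "curly1 d e f = (gl_br1 d (fst e) (fst f), act1 d (fst e) (snd f))"

text \<open>Source, target, identity of the omni-Lie 2-algebra:
  s(A+phi+u+m) = A+u, t(A+phi+u+m) = (A + delta phi) + (u + d m), delta phi = (d phi, phi d).\<close>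
definition src1 :: "('a,'b) om1 \<Rightarrow> ('a,'b) om0" where
  "src1 e = (fst (fst e), fst (snd e))"
definition tgt1 :: "('b::real_vector \<Rightarrow> 'a::real_vector) \<Rightarrow> ('a,'b) om1 \<Rightarrow> ('a,'b) om0" where
  "tgt1 d e = ((\<lambda>x. fst (fst (fst e)) x + d (snd (fst e) x),
                \<lambda>y. snd (fst (fst e)) y + snd (fst e) (d y)),
               fst (snd e) + d (snd (snd e)))"
definition ident0 :: "('a::real_vector,'b::real_vector) om0 \<Rightarrow> ('a,'b) om1" where
  "ident0 e = ((fst e, \<lambda>x. 0), (snd e, 0))"

definition sub2 :: "('b::real_vector \<Rightarrow> 'a::real_vector) \<Rightarrow> ('a,'b) om0 set \<Rightarrow> ('a,'b) om1 set \<Rightarrow> bool" where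
  "sub2 d L0 L1 \<longleftrightarrow>
     L0 \<subseteq> Om0 d \<and> L1 \<subseteq> Om1 d \<and>
     om0_zero \<in> L0 \<and> (\<forall>e\<in>L0. \<forall>f\<in>L0. om0_add e f \<in> L0) \<and> (\<forall>c. \<forall>e\<in>L0. om0_scale c e \<in> L0) \<and>
     om1_zero \<in> L1 \<and> (\<forall>e\<in>L1. \<forall>f\<in>L1. om1_add e f \<in> L1) \<and> (\<forall>c. \<forall>e\<in>L1. om1_scale c e \<in> L1) \<and>
     (\<forall>e\<in>L1. src1 e \<in> L0 \<and> tgt1 d e \<in> L0) \<and> (\<forall>e\<in>L0. ident0 e \<in> L1)"

definition perp0 :: "('b::real_vector \<Rightarrow> 'a::real_vector) \<Rightarrow> ('a,'b) om0 set \<Rightarrow> ('a,'b) om0 set" where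
  "perp0 d L0 = {e \<in> Om0 d. \<forall>l\<in>L0. pair0 e l = 0}"
definition perp1 :: "('b::real_vector \<Rightarrow> 'a::real_vector) \<Rightarrow> ('a,'b) om1 set \<Rightarrow> ('a,'b) om1 set" where
  "perp1 d L1 = {e \<in> Om1 d. \<forall>l\<in>L1. pair1 d e l = 0}"

definition dirac :: "('b::real_vector \<Rightarrow> 'a::real_vector) \<Rightarrow> ('a,'b) om0 set \<Rightarrow> ('a,'b) om1 set \<Rightarrow> bool" where
  "dirac d L0 L1 \<longleftrightarrow> sub2 d L0 L1 \<and> L0 = perp0 d L0 \<and> L1 = perp1 d L1 \<and>
     (\<forall>e\<in>L0. \<forall>f\<in>L0. cbr0 e f \<in> L0) \<and> (\<forall>e\<in>L1. \<forall>f\<in>L1. cbr1 d e f \<in> L1)"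

text \<open>D = L \<inter> gl(V) and its annihilator D^0 (levelwise).\<close>
definition Dc0 :: "('a::real_vector,'b::real_vector) om0 set \<Rightarrow> ('a,'b) gl0 set" where
  "Dc0 L0 = {A. (A, 0) \<in> L0}"
definition Dc1 :: "('a::real_vector,'b::real_vector) om1 set \<Rightarrow> ('a,'b) gl1 set" where
  "Dc1 L1 = {N. (N, (0, 0)) \<in> L1}"
definition Ann0 :: "('a::real_vector,'b::real_vector) om0 set \<Rightarrow> 'a set" where
  "Ann0 L0 = {u. \<forall>A\<in>Dc0 L0. act0 A u = 0}"
definition Ann1 :: "('b::real_vector \<Rightarrow> 'a::real_vector) \<Rightarrow> ('a,'b) om1 set \<Rightarrow> ('a \<times> 'b) set" where
  "Ann1 d L1 = {\<xi>. \<forall>N\<in>Dc1 L1. act1 d N \<xi> = 0}"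

text \<open>(D, pi) is the characteristic pair of L: pi is a linear functor V -> gl(V),
  skew on D^0, and L = {X + pi(xi) + xi : X \<in> D, xi \<in> D^0}.\<close>
definition char_pair :: "('b::real_vector \<Rightarrow> 'a::real_vector) \<Rightarrow> ('a,'b) om0 set \<Rightarrow> ('a,'b) om1 set
    \<Rightarrow> ('a \<Rightarrow> ('a,'b) gl0) \<Rightarrow> ('a \<times> 'b \<Rightarrow> ('a,'b) gl1) \<Rightarrow> bool" where
  "char_pair d L0 L1 pi0 pi1 \<longleftrightarrow>
     (\<forall>u. pi0 u \<in> End0 d) \<and> (\<forall>\<xi>. pi1 \<xi> \<in> Gl1 d) \<and>
     (\<forall>u v. pi0 (u + v) = gl0_add (pi0 u) (pi0 v)) \<and> (\<forall>c u. pi0 (c *\<^sub>R u) = gl0_scale c (pi0 u)) \<and>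
     (\<forall>\<xi> \<eta>. pi1 (\<xi> + \<eta>) = gl1_add (pi1 \<xi>) (pi1 \<eta>)) \<and> (\<forall>c \<xi>. pi1 (c *\<^sub>R \<xi>) = gl1_scale c (pi1 \<xi>)) \<and>
     (\<forall>u m. fst (pi1 (u, m)) = pi0 u) \<and>
     (\<forall>u m. fst (tgt1 d (pi1 (u, m), (u, m))) = pi0 (u + d m)) \<and>
     (\<forall>u. pi1 (u, 0) = (pi0 u, \<lambda>x. 0)) \<and>
     (\<forall>u\<in>Ann0 L0. \<forall>v\<in>Ann0 L0. act0 (pi0 u) v = - act0 (pi0 v) u) \<and>
     (\<forall>\<xi>\<in>Ann1 d L1. \<forall>\<eta>\<in>Ann1 d L1. act1 d (pi1 \<xi>) \<eta> = - act1 d (pi1 \<eta>) \<xi>) \<and>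
     L0 = {(gl0_add X (pi0 u), u) | X u. X \<in> Dc0 L0 \<and> u \<in> Ann0 L0} \<and>
     L1 = {(gl1_add N (pi1 \<xi>), \<xi>) | N \<xi>. N \<in> Dc1 L1 \<and> \<xi> \<in> Ann1 d L1}"

definition brD0_0 :: "('a \<Rightarrow> ('a,'b) gl0) \<Rightarrow> 'a \<Rightarrow> 'a \<Rightarrow> 'a" where
  "brD0_0 pi0 u v = act0 (pi0 u) v"
definition brD0_1 :: "('b::real_vector \<Rightarrow> 'a::real_vector) \<Rightarrow> ('a \<times> 'b \<Rightarrow> ('a,'b) gl1) \<Rightarrow> 'a \<times> 'b \<Rightarrow> 'a \<times> 'b \<Rightarrow> 'a \<times> 'b" where
  "brD0_1 d pi1 \<xi> \<eta> = act1 d (pi1 \<xi>) \<eta>"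

text \<open>Normalizer N_K (levelwise), N viewed as N + 0.\<close>
definition normalizer0 :: "('b::real_vector \<Rightarrow> 'a::real_vector) \<Rightarrow> ('a,'b) om0 set \<Rightarrow> ('a,'b) gl0 set" where
  "normalizer0 d K0 = {N \<in> End0 d. \<forall>k\<in>K0. curly0 (N, 0) k \<in> K0}"
definition normalizer1 :: "('b::real_vector \<Rightarrow> 'a::real_vector) \<Rightarrow> ('a,'b) om1 set \<Rightarrow> ('a,'b) gl1 set" where
  "normalizer1 d K1 = {N \<in> Gl1 d. \<forall>k\<in>K1. curly1 d (N, (0, 0)) k \<in> K1}"

end

theory Submission
  imports Defs
begin


lemma End0_iff: "(N0,N1) \<in> End0 d \<longleftrightarrow> linear N0 \<and> linear N1 \<and> (\<forall>z. N0 (d z) = d (N1 z))"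
  by (auto simp: End0_def fun_eq_iff)

lemma br0_End0:
  assumes ld: "linear d" and "N \<in> End0 d" "P \<in> End0 d" shows "gl_br0 N P \<in> End0 d"
proof -
  obtain N0 N1 P0 P1 where N: "N = (N0,N1)" and P: "P = (P0,P1)" by (cases N, cases P)
  have l: "linear N0" "linear N1" "linear P0" "linear P1" and c: "\<And>z. N0 (d z) = d (N1 z)" "\<And>z. P0 (d z) = d (P1 z)"
    using assms N P by (auto simp: End0_iff)
  show ?thesis unfolding N P gl_br0_def End0_iff fst_conv snd_conv
    using l c by (auto intro!: linearI simp: linear_add linear_scale linear_diff[OF ld] algebra_simps)
qed

lemma sub_End0:
  assumes ld: "linear d" and "(N0,N1) \<in> End0 d" "(P0,P1) \<in> End0 d"
  shows "(\<lambda>x. N0 x - P0 x, \<lambda>y. N1 y - P1 y) \<in> End0 d"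
  using assms by (auto intro!: linearI simp: End0_iff linear_add linear_scale linear_diff[OF ld] algebra_simps)


lemma level0:
  fixes d :: "'b::real_vector \<Rightarrow> 'a::real_vector"
  assumes ld: "linear d" and dir: "dirac d L0 L1" and cp: "char_pair d L0 L1 pi0 pi1"
    and NE: "N \<in> End0 d"
  shows "N \<in> normalizer0 d L0 \<longleftrightarrow>
            (\<forall>X\<in>Dc0 L0. gl_br0 N X \<in> Dc0 L0) \<and>
            (\<forall>\<xi>\<in>Ann0 L0. \<forall>\<eta>\<in>Ann0 L0. act0 N \<xi> \<in> Ann0 L0 \<and>
               act0 N (brD0_0 pi0 \<xi> \<eta>) = brD0_0 pi0 \<xi> (act0 N \<eta>) + brD0_0 pi0 (act0 N \<xi>) \<eta>)"
proof -
  obtain N0 N1 where N: "N = (N0,N1)" by (cases N)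
  have lN: "linear N0" "linear N1" "\<And>z. N0 (d z) = d (N1 z)" using NE N by (auto simp: End0_iff)
  have sub: "sub2 d L0 L1" and perp: "L0 = perp0 d L0" using dir by (auto simp: dirac_def)
  have L0sub: "L0 \<subseteq> Om0 d" using sub by (simp add: sub2_def)
  have zero: "om0_zero \<in> L0" and addc: "\<And>e f. e \<in> L0 \<Longrightarrow> f \<in> L0 \<Longrightarrow> om0_add e f \<in> L0"
    using sub by (auto simp: sub2_def)
  have piE: "\<And>u. pi0 u \<in> End0 d" using cp by (simp add: char_pair_def)
  have Leq: "L0 = {(gl0_add X (pi0 u), u) | X u. X \<in> Dc0 L0 \<and> u \<in> Ann0 L0}"
    using cp by (simp add: char_pair_def)
  have memL: "(A, u) \<in> L0 \<longleftrightarrow> (\<exists>X. X \<in> Dc0 L0 \<and> u \<in> Ann0 L0 \<and> A = gl0_add X (pi0 u))" for A u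
    by (subst Leq) auto
  have DcE: "X \<in> Dc0 L0 \<Longrightarrow> X \<in> End0 d" for X
    using L0sub by (auto simp: Dc0_def Om0_def)
  have Dcadd: "X \<in> Dc0 L0 \<Longrightarrow> Y \<in> Dc0 L0 \<Longrightarrow> gl0_add X Y \<in> Dc0 L0" for X Y
    using addc[of "(X,0)" "(Y,0)"] by (simp add: Dc0_def om0_add_def)
  have zD: "gl0_zero \<in> Dc0 L0" using zero by (simp add: Dc0_def om0_zero_def)
  have addz: "gl0_add gl0_zero P = P" for P :: "('a,'b) gl0" by (simp add: gl0_add_def gl0_zero_def)
  have piL: "u \<in> Ann0 L0 \<Longrightarrow> (pi0 u, u) \<in> L0" for u
    using memL[of "pi0 u" u] zD addz by metis
  have End0_0: "P \<in> End0 d \<Longrightarrow> fst P 0 = 0" for P by (cases P) (auto simp: End0_iff linear_0)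
  have act_br: "act0 (gl_br0 N P) v = act0 N (act0 P v) - act0 P (act0 N v)" for P v
    by (simp add: act0_def gl_br0_def N)
  have act_add: "act0 (gl0_add X P) v = act0 X v + act0 P v" for X P v
    by (simp add: act0_def gl0_add_def)
  have annX: "X \<in> Dc0 L0 \<Longrightarrow> v \<in> Ann0 L0 \<Longrightarrow> act0 X v = 0" for X v by (simp add: Ann0_def)
  have curly: "curly0 (N, 0) (A, u) = (gl_br0 N A, N0 u)" for A u
    by (simp add: curly0_def act0_def N)
  show ?thesis
  proof
    assume nz: "N \<in> normalizer0 d L0"
    hence nk: "\<And>k. k \<in> L0 \<Longrightarrow> curly0 (N,0) k \<in> L0" by (simp add: normalizer0_def)
    have 1: "\<forall>X\<in>Dc0 L0. gl_br0 N X \<in> Dc0 L0"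
    proof
      fix X assume "X \<in> Dc0 L0"
      hence "(X, 0) \<in> L0" by (simp add: Dc0_def)
      from nk[OF this] have "(gl_br0 N X, N0 0) \<in> L0" by (simp add: curly)
      thus "gl_br0 N X \<in> Dc0 L0" using lN(1) by (simp add: Dc0_def linear_0)
    qed
    have 2: "act0 N \<xi> \<in> Ann0 L0 \<and>
               act0 N (brD0_0 pi0 \<xi> \<eta>) = brD0_0 pi0 \<xi> (act0 N \<eta>) + brD0_0 pi0 (act0 N \<xi>) \<eta>"
      if x: "\<xi> \<in> Ann0 L0" and y: "\<eta> \<in> Ann0 L0" for \<xi> \<eta>
    proof -
      have "(gl_br0 N (pi0 \<xi>), N0 \<xi>) \<in> L0" using nk[OF piL[OF x]] curly by simp
      then obtain X where X: "X \<in> Dc0 L0" "N0 \<xi> \<in> Ann0 L0" "gl_br0 N (pi0 \<xi>) = gl0_add X (pi0 (N0 \<xi>))"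
        using memL by blast
      have "act0 (gl_br0 N (pi0 \<xi>)) \<eta> = act0 (pi0 (N0 \<xi>)) \<eta>"
        by (simp only: X(3) act_add annX[OF X(1) y]) simp
      thus ?thesis using X(2) by (simp add: act_br brD0_0_def) (auto simp: act0_def N dest: sym elim!: ssubst[where P="\<lambda>t. _ = _ + t", rotated] )
    qed
    show "(\<forall>X\<in>Dc0 L0. gl_br0 N X \<in> Dc0 L0) \<and>
            (\<forall>\<xi>\<in>Ann0 L0. \<forall>\<eta>\<in>Ann0 L0. act0 N \<xi> \<in> Ann0 L0 \<and>
               act0 N (brD0_0 pi0 \<xi> \<eta>) = brD0_0 pi0 \<xi> (act0 N \<eta>) + brD0_0 pi0 (act0 N \<xi>) \<eta>)"
      using 1 2 by blast
  next
    assume h: "(\<forall>X\<in>Dc0 L0. gl_br0 N X \<in> Dc0 L0) \<and>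
            (\<forall>\<xi>\<in>Ann0 L0. \<forall>\<eta>\<in>Ann0 L0. act0 N \<xi> \<in> Ann0 L0 \<and>
               act0 N (brD0_0 pi0 \<xi> \<eta>) = brD0_0 pi0 \<xi> (act0 N \<eta>) + brD0_0 pi0 (act0 N \<xi>) \<eta>)"
    have "curly0 (N,0) k \<in> L0" if k: "k \<in> L0" for k
    proof -
      obtain A u where k': "k = (A,u)" by (cases k)
      then obtain X where X: "X \<in> Dc0 L0" "u \<in> Ann0 L0" "A = gl0_add X (pi0 u)" using k memL by blast
      have Nu: "N0 u \<in> Ann0 L0" using h X(2) by (auto simp: act0_def N)
      obtain P0 P1 where P: "pi0 u = (P0,P1)" by (cases "pi0 u")
      obtain Q0 Q1 where Q: "pi0 (N0 u) = (Q0,Q1)" by (cases "pi0 (N0 u)")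
      define Y where "Y = (\<lambda>x. N0 (P0 x) - P0 (N0 x) - Q0 x, \<lambda>y. N1 (P1 y) - P1 (N1 y) - Q1 y)"
      have YE: "Y \<in> End0 d"
      proof -
        have "gl_br0 N (pi0 u) \<in> End0 d" by (rule br0_End0[OF ld NE piE])
        hence "(\<lambda>x. N0 (P0 x) - P0 (N0 x), \<lambda>y. N1 (P1 y) - P1 (N1 y)) \<in> End0 d"
          by (simp add: gl_br0_def N P)
        from sub_End0[OF ld this piE[of "N0 u", unfolded Q]] show ?thesis by (simp add: Y_def)
      qed
      have YL: "(Y, 0) \<in> L0"
      proof (subst perp, unfold perp0_def, safe)
        show "(Y,0) \<in> Om0 d" using YE by (simp add: Om0_def)
      next
        fix B v assume l: "(B, v) \<in> L0"
        then obtain Z where Z: "Z \<in> Dc0 L0" "v \<in> Ann0 L0" "B = gl0_add Z (pi0 v)" using memL by blast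
        have B0: "act0 B 0 = 0" using Z(3) End0_0[OF DcE[OF Z(1)]] End0_0[OF piE[of v]]
          by (simp add: act0_def gl0_add_def)
        have "N0 (fst (pi0 u) v) = fst (pi0 u) (N0 v) + fst (pi0 (N0 u)) v"
          using h X(2) Z(2) by (simp add: act0_def brD0_0_def N)
        hence "act0 Y v = 0" using P Q
          by (simp add: Y_def act0_def)
        thus "pair0 (Y, 0) (B, v) = 0" using B0 by (simp add: pair0_def)
      qed
      hence YD: "Y \<in> Dc0 L0" by (simp add: Dc0_def)
      have D2: "gl0_add (gl_br0 N X) Y \<in> Dc0 L0" using Dcadd h X(1) YD by blast
      have eq: "gl0_add (gl0_add (gl_br0 N X) Y) (pi0 (N0 u)) = gl_br0 N A"
        using X(3) P Q lN by (simp add: gl0_add_def gl_br0_def Y_def N linear_add algebra_simps)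
      have "(gl_br0 N A, N0 u) \<in> L0" using memL D2 Nu eq by metis
      thus ?thesis using k' curly by simp
    qed
    thus "N \<in> normalizer0 d L0" using NE by (simp add: normalizer0_def)
  qed
qed


lemma Gl1_iff: "(((N0,N1),phi) \<in> Gl1 d) \<longleftrightarrow> linear N0 \<and> linear N1 \<and> (\<forall>z. N0 (d z) = d (N1 z)) \<and> linear phi"
  by (auto simp: Gl1_def End0_iff)

definition gl1_sub :: "('a::real_vector,'b::real_vector) gl1 \<Rightarrow> ('a,'b) gl1 \<Rightarrow> ('a,'b) gl1" where
  "gl1_sub S T = ((\<lambda>x. fst (fst S) x - fst (fst T) x, \<lambda>y. snd (fst S) y - snd (fst T) y), \<lambda>x. snd S x - snd T x)"

lemma br1_Gl1:
  assumes ld: "linear d" and "N \<in> Gl1 d" "P \<in> Gl1 d" shows "gl_br1 d N P \<in> Gl1 d"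
proof -
  obtain N0 N1 f P0 P1 g where N: "N = ((N0,N1),f)" and P: "P = ((P0,P1),g)" by (metis prod.collapse)
  have l: "linear N0" "linear N1" "linear P0" "linear P1" "linear f" "linear g"
    and c: "\<And>z. N0 (d z) = d (N1 z)" "\<And>z. P0 (d z) = d (P1 z)"
    using assms N P by (auto simp: Gl1_iff)
  show ?thesis unfolding N P gl_br1_def gl_br0_def Gl1_iff fst_conv snd_conv
    using l c by (auto intro!: linearI simp: linear_add linear_scale linear_diff[OF ld] linear_add[OF ld] linear_scale[OF ld] algebra_simps)
qed

lemma sub_Gl1:
  assumes ld: "linear d" and "N \<in> Gl1 d" "P \<in> Gl1 d" shows "gl1_sub N P \<in> Gl1 d"
proof -
  obtain N0 N1 f P0 P1 g where N: "N = ((N0,N1),f)" and P: "P = ((P0,P1),g)" by (metis prod.collapse)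
  show ?thesis using assms unfolding N P gl1_sub_def
    by (auto intro!: linearI simp: Gl1_iff linear_add linear_scale linear_diff[OF ld] algebra_simps)
qed

lemma act1_br:
  assumes ld: "linear d" and "N \<in> Gl1 d" "P \<in> Gl1 d"
  shows "act1 d (gl_br1 d N P) v = act1 d N (act1 d P v) - act1 d P (act1 d N v)"
proof -
  obtain N0 N1 f P0 P1 g where N: "N = ((N0,N1),f)" and P: "P = ((P0,P1),g)" by (metis prod.collapse)
  have l: "linear N0" "linear N1" "linear P0" "linear P1" "linear f" "linear g"
    and c: "\<And>z. N0 (d z) = d (N1 z)" "\<And>z. P0 (d z) = d (P1 z)"
    using assms N P by (auto simp: Gl1_iff)
  obtain u m where v: "v = (u,m)" by (cases v)
  show ?thesis unfolding N P v act1_def gl_br1_def gl_br0_def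
    using l c by (simp add: linear_add linear_diff linear_add[OF ld] algebra_simps)
qed

lemma act1_add: "act1 d (gl1_add X P) v = act1 d X v + act1 d P v"
  by (simp add: act1_def gl1_add_def gl0_add_def)

lemma act1_sub: "act1 d (gl1_sub X P) v = act1 d X v - act1 d P v"
  by (simp add: act1_def gl1_sub_def)

lemma act1_zero: "linear d \<Longrightarrow> P \<in> Gl1 d \<Longrightarrow> act1 d P 0 = 0"
  by (cases P) (auto simp: act1_def Gl1_def End0_def linear_0 zero_prod_def)

lemma br1_add:
  assumes ld: "linear d" and "N \<in> Gl1 d"
  shows "gl_br1 d N (gl1_add X P) = gl1_add (gl_br1 d N X) (gl_br1 d N P)"
proof -
  obtain N0 N1 f where N: "N = ((N0,N1),f)" by (metis prod.collapse)
  have l: "linear N0" "linear N1" "linear f" using assms N by (auto simp: Gl1_iff)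
  show ?thesis unfolding N gl_br1_def gl_br0_def gl1_add_def gl0_add_def
    using l by (simp add: linear_add linear_add[OF ld] algebra_simps)
qed

lemma add_sub_cancel1: "gl1_add (gl1_add A (gl1_sub B C)) C = gl1_add A B"
  by (simp add: gl1_add_def gl0_add_def gl1_sub_def)


lemma level1:
  fixes d :: "'b::real_vector \<Rightarrow> 'a::real_vector"
  assumes ld: "linear d" and dir: "dirac d L0 L1" and cp: "char_pair d L0 L1 pi0 pi1"
    and NE: "N \<in> Gl1 d"
  shows "N \<in> normalizer1 d L1 \<longleftrightarrow>
            (\<forall>X\<in>Dc1 L1. gl_br1 d N X \<in> Dc1 L1) \<and>
            (\<forall>\<xi>\<in>Ann1 d L1. \<forall>\<eta>\<in>Ann1 d L1. act1 d N \<xi> \<in> Ann1 d L1 \<and>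
               act1 d N (brD0_1 d pi1 \<xi> \<eta>) = brD0_1 d pi1 \<xi> (act1 d N \<eta>) + brD0_1 d pi1 (act1 d N \<xi>) \<eta>)"
proof -
  have sub: "sub2 d L0 L1" and perp: "L1 = perp1 d L1" using dir by (auto simp: dirac_def)
  have L1sub: "L1 \<subseteq> Om1 d" using sub by (simp add: sub2_def)
  have zero: "om1_zero \<in> L1" and addc: "\<And>e f. e \<in> L1 \<Longrightarrow> f \<in> L1 \<Longrightarrow> om1_add e f \<in> L1"
    using sub by (auto simp: sub2_def)
  have piE: "\<And>u. pi1 u \<in> Gl1 d" using cp unfolding char_pair_def by (elim conjE) (erule allE)
  have Leq: "L1 = {(gl1_add X (pi1 u), u) | X u. X \<in> Dc1 L1 \<and> u \<in> Ann1 d L1}"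
    using cp unfolding char_pair_def by (elim conjE) assumption
  have memL: "(A, u) \<in> L1 \<longleftrightarrow> (\<exists>X. X \<in> Dc1 L1 \<and> u \<in> Ann1 d L1 \<and> A = gl1_add X (pi1 u))" for A u
    by (subst Leq) blast
  have DcE: "X \<in> Dc1 L1 \<Longrightarrow> X \<in> Gl1 d" for X
    using L1sub by (auto simp: Dc1_def Om1_def)
  have Dcadd: "X \<in> Dc1 L1 \<Longrightarrow> Y \<in> Dc1 L1 \<Longrightarrow> gl1_add X Y \<in> Dc1 L1" for X Y
    using addc[of "(X,(0,0))" "(Y,(0,0))"] by (simp add: Dc1_def om1_add_def)
  have zD: "gl1_zero \<in> Dc1 L1" using zero by (simp add: Dc1_def om1_zero_def zero_prod_def)
  have addz: "gl1_add gl1_zero P = P" for P :: "('a,'b) gl1"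
    by (simp add: gl1_add_def gl0_add_def gl1_zero_def gl0_zero_def)
  have piL: "u \<in> Ann1 d L1 \<Longrightarrow> (pi1 u, u) \<in> L1" for u
    using memL[of "pi1 u" u] zD addz by metis
  have annX: "X \<in> Dc1 L1 \<Longrightarrow> v \<in> Ann1 d L1 \<Longrightarrow> act1 d X v = 0" for X v by (simp add: Ann1_def)
  have curly: "curly1 d (N, (0,0)) (A, u) = (gl_br1 d N A, act1 d N u)" for A u
    by (simp add: curly1_def)
  show ?thesis
  proof
    assume nz: "N \<in> normalizer1 d L1"
    hence nk: "\<And>k. k \<in> L1 \<Longrightarrow> curly1 d (N,(0,0)) k \<in> L1" by (simp add: normalizer1_def)
    have 1: "\<forall>X\<in>Dc1 L1. gl_br1 d N X \<in> Dc1 L1"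
    proof
      fix X assume "X \<in> Dc1 L1"
      hence "(X, (0,0)) \<in> L1" by (simp add: Dc1_def)
      from nk[OF this] have "(gl_br1 d N X, act1 d N (0,0)) \<in> L1" by (simp add: curly)
      thus "gl_br1 d N X \<in> Dc1 L1" using act1_zero[OF ld NE] by (simp add: Dc1_def zero_prod_def)
    qed
    have 2: "act1 d N \<xi> \<in> Ann1 d L1 \<and>
               act1 d N (brD0_1 d pi1 \<xi> \<eta>) = brD0_1 d pi1 \<xi> (act1 d N \<eta>) + brD0_1 d pi1 (act1 d N \<xi>) \<eta>"
      if x: "\<xi> \<in> Ann1 d L1" and y: "\<eta> \<in> Ann1 d L1" for \<xi> \<eta>
    proof -
      have "(gl_br1 d N (pi1 \<xi>), act1 d N \<xi>) \<in> L1" using nk[OF piL[OF x]] curly by simp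
      then obtain X where X: "X \<in> Dc1 L1" "act1 d N \<xi> \<in> Ann1 d L1"
          "gl_br1 d N (pi1 \<xi>) = gl1_add X (pi1 (act1 d N \<xi>))"
        using memL by blast
      have "act1 d (gl_br1 d N (pi1 \<xi>)) \<eta> = act1 d (pi1 (act1 d N \<xi>)) \<eta>"
        by (simp only: X(3) act1_add annX[OF X(1) y]) simp
      hence "act1 d N (act1 d (pi1 \<xi>) \<eta>) - act1 d (pi1 \<xi>) (act1 d N \<eta>) = act1 d (pi1 (act1 d N \<xi>)) \<eta>"
        by (simp add: act1_br[OF ld NE piE])
      hence "act1 d N (act1 d (pi1 \<xi>) \<eta>) = act1 d (pi1 \<xi>) (act1 d N \<eta>) + act1 d (pi1 (act1 d N \<xi>)) \<eta>"
        by (metis diff_add_cancel add.commute)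
      thus ?thesis using X(2) by (simp add: brD0_1_def)
    qed
    show "(\<forall>X\<in>Dc1 L1. gl_br1 d N X \<in> Dc1 L1) \<and>
            (\<forall>\<xi>\<in>Ann1 d L1. \<forall>\<eta>\<in>Ann1 d L1. act1 d N \<xi> \<in> Ann1 d L1 \<and>
               act1 d N (brD0_1 d pi1 \<xi> \<eta>) = brD0_1 d pi1 \<xi> (act1 d N \<eta>) + brD0_1 d pi1 (act1 d N \<xi>) \<eta>)"
      using 1 2 by blast
  next
    assume h: "(\<forall>X\<in>Dc1 L1. gl_br1 d N X \<in> Dc1 L1) \<and>
            (\<forall>\<xi>\<in>Ann1 d L1. \<forall>\<eta>\<in>Ann1 d L1. act1 d N \<xi> \<in> Ann1 d L1 \<and>
               act1 d N (brD0_1 d pi1 \<xi> \<eta>) = brD0_1 d pi1 \<xi> (act1 d N \<eta>) + brD0_1 d pi1 (act1 d N \<xi>) \<eta>)"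
    have "curly1 d (N,(0,0)) k \<in> L1" if k: "k \<in> L1" for k
    proof -
      obtain A u where k': "k = (A,u)" by (cases k)
      then obtain X where X: "X \<in> Dc1 L1" "u \<in> Ann1 d L1" "A = gl1_add X (pi1 u)" using k memL by blast
      have Nu: "act1 d N u \<in> Ann1 d L1" using h X(2) by blast
      define Y where "Y = gl1_sub (gl_br1 d N (pi1 u)) (pi1 (act1 d N u))"
      have YE: "Y \<in> Gl1 d" unfolding Y_def
        by (rule sub_Gl1[OF ld br1_Gl1[OF ld NE piE] piE])
      have YL: "(Y, (0,0)) \<in> L1"
      proof (subst perp, unfold perp1_def, safe)
        show "(Y,(0,0)) \<in> Om1 d" using YE by (simp add: Om1_def)
      next
        fix B v assume l: "(B, v) \<in> L1"
        then obtain Z where Z: "Z \<in> Dc1 L1" "v \<in> Ann1 d L1" "B = gl1_add Z (pi1 v)" using memL by blast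
        have B0: "act1 d B (0,0) = 0" using Z(3) act1_zero[OF ld DcE[OF Z(1)]] act1_zero[OF ld piE[of v]]
          by (simp add: act1_add zero_prod_def)
        have "act1 d N (act1 d (pi1 u) v) = act1 d (pi1 u) (act1 d N v) + act1 d (pi1 (act1 d N u)) v"
          using h X(2) Z(2) by (simp add: brD0_1_def)
        hence "act1 d Y v = 0"
          by (simp add: Y_def act1_sub act1_br[OF ld NE piE])
        thus "pair1 d (Y, (0,0)) (B, v) = 0" using B0 by (simp add: pair1_def)
      qed
      hence YD: "Y \<in> Dc1 L1" by (simp add: Dc1_def)
      have D2: "gl1_add (gl_br1 d N X) Y \<in> Dc1 L1" using Dcadd h X(1) YD by blast
      have eq: "gl1_add (gl1_add (gl_br1 d N X) Y) (pi1 (act1 d N u)) = gl_br1 d N A"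
        unfolding Y_def add_sub_cancel1 X(3) by (rule br1_add[OF ld NE, symmetric])
      have "(gl_br1 d N A, act1 d N u) \<in> L1" using memL D2 Nu eq by metis
      thus ?thesis using k' curly by simp
    qed
    thus "N \<in> normalizer1 d L1" using NE by (simp add: normalizer1_def)
  qed
qed


theorem mainTheorem10:
  fixes d :: "'b::euclidean_space \<Rightarrow> 'a::euclidean_space"
    and L0 :: "('a,'b) om0 set" and L1 :: "('a,'b) om1 set"
    and pi0 :: "'a \<Rightarrow> ('a,'b) gl0" and pi1 :: "'a \<times> 'b \<Rightarrow> ('a,'b) gl1"
  assumes "linear d"
    and "dirac d L0 L1"
    and "char_pair d L0 L1 pi0 pi1"
  shows "(\<forall>N\<in>End0 d. N \<in> normalizer0 d L0 \<longleftrightarrow>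
            (\<forall>X\<in>Dc0 L0. gl_br0 N X \<in> Dc0 L0) \<and>
            (\<forall>\<xi>\<in>Ann0 L0. \<forall>\<eta>\<in>Ann0 L0. act0 N \<xi> \<in> Ann0 L0 \<and>
               act0 N (brD0_0 pi0 \<xi> \<eta>) = brD0_0 pi0 \<xi> (act0 N \<eta>) + brD0_0 pi0 (act0 N \<xi>) \<eta>))
       \<and> (\<forall>N\<in>Gl1 d. N \<in> normalizer1 d L1 \<longleftrightarrow>
            (\<forall>X\<in>Dc1 L1. gl_br1 d N X \<in> Dc1 L1) \<and>
            (\<forall>\<xi>\<in>Ann1 d L1. \<forall>\<eta>\<in>Ann1 d L1. act1 d N \<xi> \<in> Ann1 d L1 \<and>
               act1 d N (brD0_1 d pi1 \<xi> \<eta>) = brD0_1 d pi1 \<xi> (act1 d N \<eta>) + brD0_1 d pi1 (act1 d N \<xi>) \<eta>))"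
  proof -
  show ?thesis
    using level0[OF assms(1,2,3)] level1[OF assms(1,2,3)] by blast
qed

end
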